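(* The equation $$((a\to b)\to(c\to b))\cap(a\to c)\cap(b\to a)\le c\to a$$ holds in every orthomodular lattice admitting a strong set of states, but fails in the orthomodular lattice MG1.
   Context: Write $a\to b=a'\cup(a\cap b)$. A state on an ortholattice $L$ is a map $m:L\to[0,1]$ with $m(1)=1$ and $a\le b'\Rightarrow m(a\cup b)=m(a)+m(b)$. $L$ admits a strong set of states if there is a nonempty set $S$ of states such that for all $a,b\in L$ with $a\not\le b$ some $m\in S$ has $m(a)=1$ and $m(b)\ne1$. MG1 is the orthomodular lattice of the Greechie diagram with 19 atoms $v,e_1,e_2,e_3,a_1,a_2,a_3,b_1,b_2,b_3,c_1,c_2,c_3,d_1,d_2,d_3,f_1,f_2,u$ and 11 three-atom blocks: $\{v,e_1,a_1\}$, $\{v,e_2,a_2\}$, $\{v,e_3,a_3\}$, $\{a_1,b_1,c_1\}$, $\{a_2,b_2,c_2\}$, $\{a_3,b_3,c_3\}$, $\{b_1,b_2,b_3\}$, $\{c_1,f_1,d_1\}$, $\{c_2,f_2,d_2\}$, $\{c_3,u,d_3\}$, $\{d_1,d_2,d_3\}$. That is, it is the unique orthomodular lattice whose atoms are these and whose maximal Boolean subalgebras are generated by these blocks; each block consists of mutually orthogonal atoms with join $1$. *)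

theory Defs
  imports Complex_Main "HOL-Library.Complemented_Lattices"
begin

definition oimp :: "('a \<Rightarrow> 'a \<Rightarrow> 'a) \<Rightarrow> ('a \<Rightarrow> 'a \<Rightarrow> 'a) \<Rightarrow> ('a \<Rightarrow> 'a)
    \<Rightarrow> 'a \<Rightarrow> 'a \<Rightarrow> 'a" where
  "oimp sup' inf' compl' a b = sup' (compl' a) (inf' a b)"

definition eq12 :: "('a \<Rightarrow> 'a \<Rightarrow> bool) \<Rightarrow> ('a \<Rightarrow> 'a \<Rightarrow> 'a) \<Rightarrow> ('a \<Rightarrow> 'a \<Rightarrow> 'a)
    \<Rightarrow> ('a \<Rightarrow> 'a) \<Rightarrow> 'a \<Rightarrow> 'a \<Rightarrow> 'a \<Rightarrow> bool" where
  "eq12 le' sup' inf' compl' a b c =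
     (let imp = oimp sup' inf' compl' in
      le' (inf' (inf' (imp (imp a b) (imp c b)) (imp a c)) (imp b a)) (imp c a))"

definition is_state :: "('a::orthocomplemented_lattice \<Rightarrow> real) \<Rightarrow> bool" where
  "is_state m \<longleftrightarrow> (\<forall>a. 0 \<le> m a \<and> m a \<le> 1) \<and> m top = 1 \<and>
     (\<forall>a b. a \<le> - b \<longrightarrow> m (sup a b) = m a + m b)"

definition admits_strong_set_of_states :: "'a::orthocomplemented_lattice itself \<Rightarrow> bool" where
  "admits_strong_set_of_states _ \<longleftrightarrow>
     (\<exists>S :: ('a \<Rightarrow> real) set. S \<noteq> {} \<and> (\<forall>m\<in>S. is_state m) \<and>
        (\<forall>a b :: 'a. \<not> a \<le> b \<longrightarrow> (\<exists>m\<in>S. m a = 1 \<and> m b \<noteq> 1)))"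

datatype mg1_atom = v | e1 | e2 | e3 | a1 | a2 | a3 | b1 | b2 | b3
  | c1 | c2 | c3 | d1 | d2 | d3 | f1 | f2 | u

definition mg1_blocks :: "mg1_atom set list" where
  "mg1_blocks = [{v,e1,a1}, {v,e2,a2}, {v,e3,a3}, {a1,b1,c1}, {a2,b2,c2}, {a3,b3,c3},
                 {b1,b2,b3}, {c1,f1,d1}, {c2,f2,d2}, {c3,u,d3}, {d1,d2,d3}]"

definition mg1_orth :: "mg1_atom \<Rightarrow> mg1_atom \<Rightarrow> bool" where
  "mg1_orth p q \<longleftrightarrow> p \<noteq> q \<and> (\<exists>B\<in>set mg1_blocks. p \<in> B \<and> q \<in> B)"

text \<open>Since every block has three atoms, each block generates the 8-element Boolean algebra
  {0, p, q, r, p', q', r', 1} with p' = q \<union> r etc.\<close>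
datatype mg1 = Zero | One | At mg1_atom | Co mg1_atom

fun mg1_le :: "mg1 \<Rightarrow> mg1 \<Rightarrow> bool" where
  "mg1_le Zero _ = True"
| "mg1_le _ One = True"
| "mg1_le (At p) (At q) = (p = q)"
| "mg1_le (At p) (Co q) = mg1_orth p q"
| "mg1_le (Co p) (Co q) = (p = q)"
| "mg1_le _ _ = False"

definition mg1_less :: "mg1 \<Rightarrow> mg1 \<Rightarrow> bool" where
  "mg1_less x y \<longleftrightarrow> mg1_le x y \<and> x \<noteq> y"

definition mg1_sup :: "mg1 \<Rightarrow> mg1 \<Rightarrow> mg1" where
  "mg1_sup x y = (THE z. mg1_le x z \<and> mg1_le y z \<and>
                        (\<forall>w. mg1_le x w \<and> mg1_le y w \<longrightarrow> mg1_le z w))"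

definition mg1_inf :: "mg1 \<Rightarrow> mg1 \<Rightarrow> mg1" where
  "mg1_inf x y = (THE z. mg1_le z x \<and> mg1_le z y \<and>
                        (\<forall>w. mg1_le w x \<and> mg1_le w y \<longrightarrow> mg1_le w z))"

fun mg1_compl :: "mg1 \<Rightarrow> mg1" where
  "mg1_compl Zero = One"
| "mg1_compl One = Zero"
| "mg1_compl (At p) = Co p"
| "mg1_compl (Co p) = At p"

definition mg1_minus :: "mg1 \<Rightarrow> mg1 \<Rightarrow> mg1" where
  "mg1_minus x y = mg1_inf x (mg1_compl y)"

end

theory Submission
  imports Defs
begin


fun nb :: "mg1_atom \<Rightarrow> mg1_atom list" where
  "nb v = [e1, e2, e3, a1, a2, a3]"
| "nb e1 = [v, a1]"
| "nb e2 = [v, a2]"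
| "nb e3 = [v, a3]"
| "nb a1 = [v, e1, b1, c1]"
| "nb a2 = [v, e2, b2, c2]"
| "nb a3 = [v, e3, b3, c3]"
| "nb b1 = [a1, b2, b3, c1]"
| "nb b2 = [a2, b1, b3, c2]"
| "nb b3 = [a3, b1, b2, c3]"
| "nb c1 = [a1, b1, d1, f1]"
| "nb c2 = [a2, b2, d2, f2]"
| "nb c3 = [a3, b3, d3, u]"
| "nb d1 = [c1, d2, d3, f1]"
| "nb d2 = [c2, d1, d3, f2]"
| "nb d3 = [c3, d1, d2, u]"
| "nb f1 = [c1, d1]"
| "nb f2 = [c2, d2]"
| "nb u = [c3, d3]"

lemma orth_nb: "mg1_orth p q \<longleftrightarrow> q \<in> set (nb p)"
  unfolding mg1_orth_def mg1_blocks_def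
  by (cases p; cases q; simp)

definition cn :: "mg1_atom \<Rightarrow> mg1_atom \<Rightarrow> mg1_atom list" where
  "cn p q = filter (\<lambda>r. r \<in> set (nb q)) (nb p)"

lemma cn_len: "p \<noteq> q \<Longrightarrow> length (cn p q) \<le> 1"
  unfolding cn_def by (cases p; cases q; simp)

lemma orth_ex: "mg1_orth p q \<Longrightarrow> cn p q \<noteq> []"
  unfolding cn_def orth_nb by (cases p; cases q; simp)

lemma orth_sym: "mg1_orth p q \<Longrightarrow> mg1_orth q p"
  unfolding mg1_orth_def by blast

lemma orth_irr: "\<not> mg1_orth p p"
  unfolding mg1_orth_def by blast

lemma cn_iff: "r \<in> set (cn p q) \<longleftrightarrow> mg1_orth p r \<and> mg1_orth q r"
  unfolding cn_def orth_nb by auto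

lemma cn_cases: "p \<noteq> q \<Longrightarrow> cn p q = [] \<or> (\<exists>r. cn p q = [r])"
  using cn_len[of p q] by (cases "cn p q" rule: list.exhaust; cases "tl (cn p q)"; auto)

fun jn :: "mg1 \<Rightarrow> mg1 \<Rightarrow> mg1" where
  "jn Zero y = y"
| "jn One y = One"
| "jn (At p) Zero = At p"
| "jn (At p) One = One"
| "jn (At p) (At q) = (if p = q then At p else (case cn p q of [r] \<Rightarrow> Co r | _ \<Rightarrow> One))"
| "jn (At p) (Co q) = (if mg1_orth p q then Co q else One)"
| "jn (Co p) Zero = Co p"
| "jn (Co p) One = One"
| "jn (Co p) (At q) = (if mg1_orth q p then Co p else One)"
| "jn (Co p) (Co q) = (if p = q then Co p else One)"

definition islub where
  "islub x y z \<longleftrightarrow> mg1_le x z \<and> mg1_le y z \<and> (\<forall>w. mg1_le x w \<and> mg1_le y w \<longrightarrow> mg1_le z w)"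

lemma le_refl: "mg1_le x x"
  by (cases x) auto

lemma le_antisym: "mg1_le x y \<Longrightarrow> mg1_le y x \<Longrightarrow> x = y"
  by (cases x; cases y) (auto dest: orth_sym simp: orth_irr)

lemma le_trans: "mg1_le x y \<Longrightarrow> mg1_le y z \<Longrightarrow> mg1_le x z"
  by (cases x; cases y; cases z) auto

lemma le_One: "mg1_le x One" by (cases x) auto

lemma jn_AA: "islub (At p) (At q) (jn (At p) (At q))"
proof (cases "p = q")
  case True then show ?thesis unfolding islub_def by auto
next
  case False
  from cn_cases[OF False] show ?thesis
  proof
    assume h: "cn p q = []"
    have "\<not> (mg1_orth p r \<and> mg1_orth q r)" for r using cn_iff[of r p q] h by auto
    then show ?thesis using False h unfolding islub_def
      by (auto simp: le_One) (case_tac w; auto)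
  next
    assume "\<exists>r. cn p q = [r]"
    then obtain r where h: "cn p q = [r]" by blast
    have "mg1_orth p s \<and> mg1_orth q s \<longleftrightarrow> s = r" for s using cn_iff[of s p q] h by auto
    then show ?thesis using False h unfolding islub_def
      by auto (case_tac w; auto; metis)
  qed
qed

lemma jn_lub: "islub x y (jn x y)"
  apply (cases x; cases y)
  using jn_AA
  by (auto simp: islub_def le_One le_refl dest: orth_sym) (case_tac w; auto dest: orth_sym)+

lemma sup_eq: "mg1_sup = jn"
proof (intro ext)
  fix x y
  show "mg1_sup x y = jn x y"
    unfolding mg1_sup_def
    by (rule the_equality) (use jn_lub[of x y] le_antisym in \<open>auto simp: islub_def\<close>)
qed

lemma cc: "mg1_compl (mg1_compl x) = x" by (cases x) auto

lemma le_compl: "mg1_le (mg1_compl y) (mg1_compl x) \<longleftrightarrow> mg1_le x y"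
  by (cases x; cases y) (auto dest: orth_sym)

definition mt where "mt x y = mg1_compl (jn (mg1_compl x) (mg1_compl y))"

lemma inf_eq: "mg1_inf = mt"
proof (intro ext)
  fix x y
  have L: "islub (mg1_compl x) (mg1_compl y) (jn (mg1_compl x) (mg1_compl y))" by (rule jn_lub)
  have G: "mg1_le z x \<and> mg1_le z y \<and> (\<forall>w. mg1_le w x \<and> mg1_le w y \<longrightarrow> mg1_le w z)"
    if "z = mt x y" for z
  proof -
    have "\<forall>w. mg1_le (mg1_compl x) (mg1_compl w) \<and> mg1_le (mg1_compl y) (mg1_compl w) \<longrightarrow>
          mg1_le (jn (mg1_compl x) (mg1_compl y)) (mg1_compl w)" using L unfolding islub_def by blast
    then show ?thesis using L that unfolding islub_def mt_def
      by (metis cc le_compl)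
  qed
  show "mg1_inf x y = mt x y"
    unfolding mg1_inf_def
    by (rule the_equality) (use G le_antisym in blast)+
qed

lemma jn_ub1: "mg1_le x (jn x y)" using jn_lub unfolding islub_def by blast
lemma jn_ub2: "mg1_le y (jn x y)" using jn_lub unfolding islub_def by blast
lemma jn_least: "mg1_le x w \<Longrightarrow> mg1_le y w \<Longrightarrow> mg1_le (jn x y) w" using jn_lub unfolding islub_def by blast
lemma mt_lb1: "mg1_le (mt x y) x" unfolding mt_def by (metis jn_ub1 cc le_compl)
lemma mt_lb2: "mg1_le (mt x y) y" unfolding mt_def by (metis jn_ub2 cc le_compl)
lemma mt_greatest: "mg1_le w x \<Longrightarrow> mg1_le w y \<Longrightarrow> mg1_le w (mt x y)"
  unfolding mt_def by (metis jn_least cc le_compl)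

lemma om: "mg1_le x y \<Longrightarrow> jn x (mt (mg1_compl x) y) = y"
proof (cases x; cases y)
  fix p q assume h: "mg1_le x y" "x = At p" "y = Co q"
  then have o: "mg1_orth p q" by simp
  then have pq: "p \<noteq> q" using orth_irr by blast
  obtain r where r: "cn p q = [r]" using cn_cases[OF pq] orth_ex[OF o] by blast
  then have "r \<in> set (cn p q)" by simp
  then have pr: "mg1_orth p r" "mg1_orth q r" using cn_iff by blast+
  then have prn: "p \<noteq> r" using orth_irr by blast
  have "q \<in> set (cn p r)" using cn_iff o pr orth_sym by blast
  then have "cn p r = [q]" using cn_cases[OF prn] by auto
  then show ?thesis using h r pq prn unfolding mt_def by simp
qed (auto simp: mt_def dest: orth_sym simp: orth_irr split: list.split)

lemma jn_c: "jn x (mg1_compl x) = One" by (cases x) (auto simp: orth_irr)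
lemma mt_c: "mt x (mg1_compl x) = Zero" by (cases x) (auto simp: orth_irr mt_def)

lemma mg1_oml: "class.orthomodular_lattice mg1_minus mg1_compl mg1_inf mg1_le mg1_less mg1_sup Zero One"
  unfolding sup_eq inf_eq
  apply unfold_locales
  apply (simp_all add: mg1_less_def mg1_minus_def sup_eq inf_eq le_refl jn_ub1 jn_ub2 jn_least mt_lb1 mt_lb2 mt_greatest le_One cc om jn_c mt_c)
  using le_antisym le_trans le_compl
  apply (auto)
  done



lemma st_compl:
  fixes m :: "'a::orthocomplemented_lattice \<Rightarrow> real"
  assumes "is_state m" shows "m (- a) = 1 - m a"
proof -
  have "a \<le> - (- a)" by simp
  then have "m (sup a (- a)) = m a + m (- a)" using assms unfolding is_state_def by blast
  moreover have "m (sup a (- a)) = 1" using assms unfolding is_state_def by simp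
  ultimately show ?thesis by simp
qed

lemma st_imp:
  fixes m :: "'a::orthocomplemented_lattice \<Rightarrow> real"
  assumes "is_state m" shows "m (sup (- a) (inf a b)) = 1 - m a + m (inf a b)"
proof -
  have "- a \<le> - (inf a b)" by (simp add: compl_mono)
  then have "m (sup (- a) (inf a b)) = m (- a) + m (inf a b)" using assms unfolding is_state_def by blast
  then show ?thesis using st_compl[OF assms] by simp
qed

lemma st_mono:
  fixes m :: "'a::orthomodular_lattice \<Rightarrow> real"
  assumes "is_state m" "a \<le> b" shows "m a \<le> m b"
proof -
  have e: "sup a (inf (- a) b) = b" using orthomodular[OF assms(2)] by simp
  have "inf (- a) b \<le> - a" by simp
  then have "- (- a) \<le> - (inf (- a) b)" by (rule compl_mono)
  then have "a \<le> - (inf (- a) b)" by simp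
  then have "m (sup a (inf (- a) b)) = m a + m (inf (- a) b)" using assms unfolding is_state_def by blast
  moreover have "m (inf (- a) b) \<ge> 0" using assms unfolding is_state_def by blast
  ultimately show ?thesis using e by simp
qed

lemma part1:
  assumes "admits_strong_set_of_states TYPE('a::orthomodular_lattice)"
  shows "\<forall>a b c :: 'a. eq12 (\<le>) sup inf uminus a b c"
proof (intro allI)
  fix a b c :: 'a
  obtain S where S: "\<forall>m\<in>S. is_state m" "\<forall>a b :: 'a. \<not> a \<le> b \<longrightarrow> (\<exists>m\<in>S. m a = 1 \<and> m b \<noteq> 1)"
    using assms unfolding admits_strong_set_of_states_def by blast
  define imp where "imp = oimp sup inf (uminus :: 'a \<Rightarrow> 'a)"
  have imp: "imp p q = sup (- p) (inf p q)" for p q unfolding imp_def oimp_def by simp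
  define y where "y = inf (inf (imp (imp a b) (imp c b)) (imp a c)) (imp b a)"
  show "eq12 (\<le>) sup inf uminus a b c"
  proof (rule ccontr)
    assume "\<not> eq12 (\<le>) sup inf uminus a b c"
    then have "\<not> y \<le> imp c a" unfolding eq12_def y_def imp_def Let_def by simp
    then obtain m where m: "m \<in> S" "m y = 1" "m (imp c a) \<noteq> 1" using S by blast
    have st: "is_state m" using S m by blast
    have le1: "m p \<le> 1" for p using st unfolding is_state_def by blast
    have one: "m p = 1" if "y \<le> p" for p using st_mono[OF st that] le1[of p] m by simp
    have I: "m (imp p q) = 1 - m p + m (inf p q)" for p q unfolding imp using st_imp[OF st] .
    have h1: "m (imp a c) = 1" by (rule one) (simp add: y_def le_infI1)
    have h2: "m (imp b a) = 1" by (rule one) (simp add: y_def)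
    have h3: "m (imp (imp a b) (imp c b)) = 1" by (rule one) (simp add: y_def le_infI1)
    have A: "m (inf a c) = m a" using h1 I by simp
    have B: "m (inf b a) = m b" using h2 I by simp
    have C: "m (inf (imp a b) (imp c b)) = m (imp a b)" using h3 I by simp
    have C2: "m (inf (imp a b) (imp c b)) \<le> m (imp c b)" by (rule st_mono[OF st]) simp
    have D: "m (inf c b) \<le> m b" by (rule st_mono[OF st]) simp
    have E: "m (inf a b) = m b" using B by (simp add: inf_commute)
    have "m c \<le> m a" using C C2 D E I[of a b] I[of c b] by linarith
    moreover have "m (inf c a) \<le> m c" by (rule st_mono[OF st]) simp
    moreover have "m (inf c a) = m a" using A by (simp add: inf_commute)
    ultimately have "m (imp c a) = 1" using I[of c a] by linarith
    then show False using m by simp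
  qed
qed


lemma part3: "\<not> (\<forall>a b c. eq12 mg1_le mg1_sup mg1_inf mg1_compl a b c)"
proof
  assume "\<forall>a b c. eq12 mg1_le mg1_sup mg1_inf mg1_compl a b c"
  then have "eq12 mg1_le mg1_sup mg1_inf mg1_compl (Co b1) (Co c2) (Co d1)" by blast
  then show False by (simp add: eq12_def oimp_def sup_eq inf_eq mt_def cn_def orth_nb)
qed

theorem mainTheorem12:
  shows "(admits_strong_set_of_states TYPE('a::orthomodular_lattice) \<longrightarrow>
            (\<forall>a b c :: 'a. eq12 (\<le>) sup inf uminus a b c))
       \<and> class.orthomodular_lattice mg1_minus mg1_compl mg1_inf mg1_le mg1_less mg1_sup Zero One
       \<and> \<not> (\<forall>a b c. eq12 mg1_le mg1_sup mg1_inf mg1_compl a b c)"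
  using part1 mg1_oml part3 by blast

end
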